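(* Let $f$ be a homeomorphism of a compact, connected, separable metric space $\mathcal M$, and assume that $\mathcal M$ itself is not a chain-transitive set for $f$. Let $C$ be a reversible core of $f$. Then there exist an infinite sequence of pairwise distinct dissipative attractors $A_1,A_2,\dots$ of $f$ and an infinite sequence of pairwise distinct dissipative repellers $R_1,R_2,\dots$ of $f$ which accumulate on $C$: there are $\delta_k\to 0$ such that $A_k$ and $R_k$ lie in the $\delta_k$-neighbourhood of $C$ for every $k$ (so all limit points of these sequences lie in $C$).
   Context: An $\varepsilon$-orbit of $f$ is a finite sequence $x_1,\dots,x_N$ with $\mathrm{dist}(f(x_j),x_{j+1})<\varepsilon$ for $j=1,\dots,N-1$; it connects $x_1$ to $x_N$. A closed invariant set $\Lambda$ is chain-transitive if for every $\varepsilon>0$ and all $x,y\in\Lambda$ there is an $\varepsilon$-orbit lying in $\Lambda$ connecting $x$ to $y$. A closed invariant set $A$ is stable if for every $\delta>0$ there is $\varepsilon>0$ such that no $\varepsilon$-orbit starting in $A$ leaves the $\delta$-neighbourhood of $A$. A CRH-attractor (Conley–Ruelle–Hurley attractor) of $f$ is a closed invariant set that is chain-transitive and stable; a CRH-repeller of $f$ is a CRH-attractor of $f^{-1}$. A CRH-attractor $A$ is a dissipative attractor if there exists a point $x\notin A$ such that for every $\varepsilon>0$ some $\varepsilon$-orbit connects $x$ to a point of $A$; otherwise $A$ is called a reversible core. A dissipative repeller is a dissipative attractor of $f^{-1}$. *)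

theory Defs
  imports "HOL-Analysis.Analysis"
begin

definition eps_orbit :: "('a::metric_space \<Rightarrow> 'a) \<Rightarrow> real \<Rightarrow> 'a list \<Rightarrow> bool" where
  "eps_orbit h \<epsilon> xs \<longleftrightarrow> xs \<noteq> [] \<and>
     (\<forall>j. Suc j < length xs \<longrightarrow> dist (h (xs ! j)) (xs ! Suc j) < \<epsilon>)"

definition nbhd :: "'a::metric_space set \<Rightarrow> real \<Rightarrow> 'a set" where
  "nbhd A \<delta> = {y. \<exists>a\<in>A. dist y a < \<delta>}"

definition invariant_set :: "'a set \<Rightarrow> ('a \<Rightarrow> 'a) \<Rightarrow> 'a set \<Rightarrow> bool" where
  "invariant_set M h S \<longleftrightarrow> S \<subseteq> M \<and> h ` S = S"

definition chain_transitive :: "'a::metric_space set \<Rightarrow> ('a \<Rightarrow> 'a) \<Rightarrow> 'a set \<Rightarrow> bool" where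
  "chain_transitive M h L \<longleftrightarrow> closed L \<and> invariant_set M h L \<and>
     (\<forall>\<epsilon>>0. \<forall>x\<in>L. \<forall>y\<in>L. \<exists>xs. eps_orbit h \<epsilon> xs \<and> set xs \<subseteq> L \<and> hd xs = x \<and> last xs = y)"

definition stable_set :: "'a::metric_space set \<Rightarrow> ('a \<Rightarrow> 'a) \<Rightarrow> 'a set \<Rightarrow> bool" where
  "stable_set M h A \<longleftrightarrow> closed A \<and> invariant_set M h A \<and>
     (\<forall>\<delta>>0. \<exists>\<epsilon>>0. \<forall>xs. eps_orbit h \<epsilon> xs \<and> set xs \<subseteq> M \<and> hd xs \<in> A \<longrightarrow> set xs \<subseteq> nbhd A \<delta>)"

text \<open>CRH-attractors are taken nonempty (standard convention).\<close>
definition crh_attractor :: "'a::metric_space set \<Rightarrow> ('a \<Rightarrow> 'a) \<Rightarrow> 'a set \<Rightarrow> bool" where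
  "crh_attractor M h A \<longleftrightarrow> A \<noteq> {} \<and> chain_transitive M h A \<and> stable_set M h A"

definition dissipative_attractor :: "'a::metric_space set \<Rightarrow> ('a \<Rightarrow> 'a) \<Rightarrow> 'a set \<Rightarrow> bool" where
  "dissipative_attractor M h A \<longleftrightarrow> crh_attractor M h A \<and>
     (\<exists>x\<in>M - A. \<forall>\<epsilon>>0. \<exists>xs. eps_orbit h \<epsilon> xs \<and> set xs \<subseteq> M \<and> hd xs = x \<and> last xs \<in> A)"

definition reversible_core :: "'a::metric_space set \<Rightarrow> ('a \<Rightarrow> 'a) \<Rightarrow> 'a set \<Rightarrow> bool" where
  "reversible_core M h A \<longleftrightarrow> crh_attractor M h A \<and> \<not> dissipative_attractor M h A"

text \<open>Repellers of h are attractors of the inverse map; these are stated with the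
  inverse g of the homeomorphism directly.\<close>

end

theory Submission
  imports Defs
begin


inductive ch :: "('a::metric_space \<Rightarrow> 'a) \<Rightarrow> 'a set \<Rightarrow> real \<Rightarrow> 'a \<Rightarrow> 'a \<Rightarrow> bool"
  for h S e where
  ch_refl: "x \<in> S \<Longrightarrow> ch h S e x x"
| ch_step: "ch h S e x y \<Longrightarrow> z \<in> S \<Longrightarrow> dist (h y) z < e \<Longrightarrow> ch h S e x z"

definition ch2 :: "('a::metric_space \<Rightarrow> 'a) \<Rightarrow> 'a set \<Rightarrow> real \<Rightarrow> 'a \<Rightarrow> 'a \<Rightarrow> bool" where
  "ch2 h S e x y \<longleftrightarrow> (\<exists>z. ch h S e x z \<and> dist (h z) y < e \<and> y \<in> S)"

definition Om :: "('a::metric_space \<Rightarrow> 'a) \<Rightarrow> 'a set \<Rightarrow> 'a \<Rightarrow> 'a set" where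
  "Om h S x = {y. \<forall>e>0. ch2 h S e x y}"

definition stab :: "('a::metric_space \<Rightarrow> 'a) \<Rightarrow> 'a set \<Rightarrow> 'a set \<Rightarrow> bool" where
  "stab h M S \<longleftrightarrow> closed S \<and> S \<subseteq> M \<and> S \<noteq> {} \<and> h ` S \<subseteq> S \<and>
     (\<forall>\<delta>>0. \<exists>e>0. \<forall>x\<in>S. \<forall>y. ch h M e x y \<longrightarrow> y \<in> nbhd S \<delta>)"

lemma ch_in: "ch h S e x y \<Longrightarrow> x \<in> S \<and> y \<in> S"
  by (induction rule: ch.induct) auto

lemma ch_trans: "ch h S e y z \<Longrightarrow> ch h S e x y \<Longrightarrow> ch h S e x z"
  by (induction rule: ch.induct) (auto intro: ch_step)

lemma ch_mono: "ch h S e x y \<Longrightarrow> e \<le> e' \<Longrightarrow> S \<subseteq> S' \<Longrightarrow> ch h S' e' x y"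
  by (induction rule: ch.induct) (auto intro: ch_refl ch_step)

lemma ch_cons: "x \<in> S \<Longrightarrow> dist (h x) y < e \<Longrightarrow> ch h S e y z \<Longrightarrow> ch h S e x z"
  by (metis ch_in ch_refl ch_step ch_trans)

lemma ch2_ch: "ch2 h S e x y \<Longrightarrow> ch h S e x y"
  unfolding ch2_def by (auto intro: ch_step)

lemma ch2_ch_trans_aux: "ch h S e y z \<Longrightarrow> ch2 h S e x y \<Longrightarrow> ch2 h S e x z"
proof (induction rule: ch.induct)
  case (ch_refl x) then show ?case by simp
next
  case (ch_step y0 z0 w)
  then have "ch h S e x z0" using ch2_ch by blast
  then show ?case unfolding ch2_def using ch_step by blast
qed

lemma ch2_ch_trans: "ch2 h S e x y \<Longrightarrow> ch h S e y z \<Longrightarrow> ch2 h S e x z"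
  using ch2_ch_trans_aux by blast

lemma ch_ch2_trans: "ch h S e x y \<Longrightarrow> ch2 h S e y z \<Longrightarrow> ch2 h S e x z"
  unfolding ch2_def using ch_trans by blast

lemma ch2_mono: "ch2 h S e x y \<Longrightarrow> e \<le> e' \<Longrightarrow> ch2 h S e' x y"
  unfolding ch2_def using ch_mono by fastforce

lemma ch_first_step: "ch h S e x y \<Longrightarrow> x' \<in> S \<Longrightarrow> dist (h x') x < e \<Longrightarrow> ch2 h S e x' y"
proof (induction rule: ch.induct)
  case (ch_refl x) then show ?case unfolding ch2_def by (auto intro: ch.ch_refl)
next
  case (ch_step x y z)
  then have "ch h S e x' y" using ch2_ch by blast
  then show ?case unfolding ch2_def using ch_step by blast
qed

lemma ch_perturb:
  assumes "ch h S e x z" "x' \<in> S" "dist (h x') (h x) < th" "y \<in> S" "dist (h z) y < e" "0 \<le> th"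
  shows "ch2 h S (e+th) x' y"
  using assms
proof (induction arbitrary: y rule: ch.induct)
  case (ch_refl x y)
  have "dist (h x') y < e + th" using ch_refl dist_triangle[of "h x'" y "h x"] by (simp add: dist_commute)
  then show ?case unfolding ch2_def using ch_refl by (auto intro: ch.ch_refl)
next
  case (ch_step x w z y)
  have "ch2 h S (e+th) x' z" using ch_step by auto
  then have "ch h S (e+th) x' z" by (rule ch2_ch)
  then show ?case unfolding ch2_def using ch_step by force
qed

lemma list_ch:
  assumes "eps_orbit h e xs" "set xs \<subseteq> S"
  shows "i < length xs \<Longrightarrow> ch h S e (hd xs) (xs ! i)"
proof (induction i)
  case 0
  then show ?case using assms by (auto simp: hd_conv_nth intro!: ch_refl)
next
  case (Suc i)
  then have "ch h S e (hd xs) (xs ! i)" by simp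
  moreover have "dist (h (xs ! i)) (xs ! Suc i) < e" using assms(1) Suc.prems unfolding eps_orbit_def by auto
  moreover have "xs ! Suc i \<in> S" using assms(2) Suc.prems by auto
  ultimately show ?case by (meson ch_step)
qed

lemma list_ch_set:
  assumes "eps_orbit h e xs" "set xs \<subseteq> S" "y \<in> set xs"
  shows "ch h S e (hd xs) y"
  using list_ch[OF assms(1,2)] assms(3) by (metis in_set_conv_nth)

lemma list_ch_last:
  assumes "eps_orbit h e xs" "set xs \<subseteq> S"
  shows "ch h S e (hd xs) (last xs)"
  using list_ch_set[OF assms] assms(1) unfolding eps_orbit_def by auto

lemma ch_list: "ch h S e x y \<Longrightarrow> \<exists>xs. eps_orbit h e xs \<and> set xs \<subseteq> S \<and> hd xs = x \<and> last xs = y"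
proof (induction rule: ch.induct)
  case (ch_refl x)
  then show ?case by (intro exI[of _ "[x]"]) (auto simp: eps_orbit_def)
next
  case (ch_step x y z)
  then obtain xs where xs: "eps_orbit h e xs" "set xs \<subseteq> S" "hd xs = x" "last xs = y" by blast
  have ne: "xs \<noteq> []" using xs unfolding eps_orbit_def by auto
  have "eps_orbit h e (xs @ [z])"
    unfolding eps_orbit_def
  proof (intro conjI allI impI)
    fix j assume j: "Suc j < length (xs @ [z])"
    show "dist (h ((xs @ [z]) ! j)) ((xs @ [z]) ! Suc j) < e"
    proof (cases "Suc j < length xs")
      case True
      then show ?thesis using xs(1) unfolding eps_orbit_def by (auto simp: nth_append)
    next
      case False
      then have "j = length xs - 1" "Suc j = length xs" using j by auto
      then show ?thesis using ch_step ne xs(4) by (auto simp: nth_append last_conv_nth)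
    qed
  qed simp
  then show ?case using xs ch_step ne by (intro exI[of _ "xs @ [z]"]) auto
qed

lemma ch_iff_list: "ch h S e x y \<longleftrightarrow> (\<exists>xs. eps_orbit h e xs \<and> set xs \<subseteq> S \<and> hd xs = x \<and> last xs = y)"
  using ch_list list_ch_last by metis

lemma stable_set_iff:
  "stable_set M h A \<longleftrightarrow> closed A \<and> invariant_set M h A \<and>
     (\<forall>\<delta>>0. \<exists>e>0. \<forall>x\<in>A. \<forall>y. ch h M e x y \<longrightarrow> y \<in> nbhd A \<delta>)"
  unfolding stable_set_def
proof (intro conj_cong refl iff_allI imp_cong ex_cong1)
  fix \<delta> e :: real
  show "(\<forall>xs. eps_orbit h e xs \<and> set xs \<subseteq> M \<and> hd xs \<in> A \<longrightarrow> set xs \<subseteq> nbhd A \<delta>) =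
        (\<forall>x\<in>A. \<forall>y. ch h M e x y \<longrightarrow> y \<in> nbhd A \<delta>)"
    using ch_list list_ch_set by (smt (verit, ccfv_threshold) last_in_set subset_iff eps_orbit_def)
qed

lemma chain_transitive_iff:
  "chain_transitive M h L \<longleftrightarrow> closed L \<and> invariant_set M h L \<and>
     (\<forall>e>0. \<forall>x\<in>L. \<forall>y\<in>L. ch h L e x y)"
  unfolding chain_transitive_def ch_iff_list by simp

lemma dissipative_iff:
  "dissipative_attractor M h A \<longleftrightarrow> crh_attractor M h A \<and>
     (\<exists>x\<in>M - A. \<forall>e>0. \<exists>y\<in>A. ch h M e x y)"
  unfolding dissipative_attractor_def ch_iff_list
  apply (rule conj_cong[OF refl])
  apply (rule bex_cong[OF refl])
  apply (rule all_cong)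
  by blast



lemma open_nbhd: "open (nbhd A \<delta>)"
proof -
  have "nbhd A \<delta> = (\<Union>a\<in>A. ball a \<delta>)" unfolding nbhd_def by (auto simp: dist_commute)
  then show ?thesis by auto
qed

lemma nbhd_mono: "\<delta> \<le> \<delta>' \<Longrightarrow> nbhd A \<delta> \<subseteq> nbhd A \<delta>'"
  unfolding nbhd_def by force

lemma nbhd_self: "\<delta> > 0 \<Longrightarrow> A \<subseteq> nbhd A \<delta>"
  unfolding nbhd_def by force

lemma inv_Suc_small: "(e::real) > 0 \<Longrightarrow> \<exists>n. inverse (real (Suc n)) < e"
  by (metis ex_inverse_of_nat_less Suc_pred)

lemma finite_chain_min:
  assumes "finite F" "F \<noteq> {}" "\<forall>X\<in>F. \<forall>Y\<in>F. X \<subseteq> Y \<or> Y \<subseteq> X"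
  shows "\<exists>m\<in>F. \<forall>X\<in>F. m \<subseteq> (X::'a set)"
  using assms
proof (induction rule: finite_ne_induct)
  case (singleton x) then show ?case by auto
next
  case (insert x F)
  then obtain m where "m \<in> F" "\<forall>X\<in>F. m \<subseteq> X" by auto
  then show ?case using insert.prems by (metis insert_iff subset_trans insertCI)
qed

locale dyn =
  fixes M :: "'a::metric_space set" and f g :: "'a \<Rightarrow> 'a"
  assumes hom: "homeomorphism M M f g" and cpt: "compact M"
begin

lemma fM: "x \<in> M \<Longrightarrow> f x \<in> M" using hom unfolding homeomorphism_def by auto
lemma gM: "x \<in> M \<Longrightarrow> g x \<in> M" using hom unfolding homeomorphism_def by auto
lemma gf: "x \<in> M \<Longrightarrow> g (f x) = x" using hom unfolding homeomorphism_def by auto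
lemma fg: "x \<in> M \<Longrightarrow> f (g x) = x" using hom unfolding homeomorphism_def by auto
lemma contf: "continuous_on M f" using hom unfolding homeomorphism_def by auto
lemma contg: "continuous_on M g" using hom unfolding homeomorphism_def by auto
lemma closedM: "closed M" using cpt compact_imp_closed by auto

lemma uf: "e > 0 \<Longrightarrow> \<exists>d>0. \<forall>x\<in>M. \<forall>x'\<in>M. dist x' x < d \<longrightarrow> dist (f x') (f x) < e"
  using compact_uniformly_continuous[OF contf cpt] unfolding uniformly_continuous_on_def by blast

lemma ug: "e > 0 \<Longrightarrow> \<exists>d>0. \<forall>x\<in>M. \<forall>x'\<in>M. dist x' x < d \<longrightarrow> dist (g x') (g x) < e"
  using compact_uniformly_continuous[OF contg cpt] unfolding uniformly_continuous_on_def by blast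

lemma stab_image:
  assumes "stab f M S"
  shows "stab f M (f ` S)"
proof -
  have S: "closed S" "S \<subseteq> M" "S \<noteq> {}" "f ` S \<subseteq> S"
    and st: "\<forall>\<delta>>0. \<exists>e>0. \<forall>x\<in>S. \<forall>y. ch f M e x y \<longrightarrow> y \<in> nbhd S \<delta>"
    using assms unfolding stab_def by auto
  have "compact S" using S cpt by (metis compact_Int_closed inf.absorb_iff2)
  then have "compact (f ` S)" using compact_continuous_image continuous_on_subset[OF contf S(2)] by blast
  then have cl: "closed (f ` S)" by (rule compact_imp_closed)
  have "\<exists>e>0. \<forall>x\<in>f ` S. \<forall>y. ch f M e x y \<longrightarrow> y \<in> nbhd (f ` S) \<delta>" if "\<delta> > 0" for \<delta>
  proof -
    obtain d where d: "d > 0" "\<forall>x\<in>M. \<forall>x'\<in>M. dist x' x < d \<longrightarrow> dist (f x') (f x) < \<delta>/2"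
      using uf[of "\<delta>/2"] \<open>\<delta>>0\<close> by auto
    obtain e where e: "e > 0" "\<forall>x\<in>S. \<forall>y. ch f M e x y \<longrightarrow> y \<in> nbhd S d" using st d by auto
    define e' where "e' = min e (\<delta>/2)"
    have "y \<in> nbhd (f ` S) \<delta>" if x: "x \<in> f ` S" and c: "ch f M e' x y" for x y
      using c
    proof (cases rule: ch.cases)
      case ch_refl then show ?thesis using x \<open>\<delta>>0\<close> nbhd_self by blast
    next
      case (ch_step y')
      then have "ch f M e x y'" using ch_mono e'_def by fastforce
      then have "y' \<in> nbhd S d" using e x S(4) by blast
      then obtain s where s: "s \<in> S" "dist y' s < d" unfolding nbhd_def by auto
      have "y' \<in> M" using ch_in ch_step by metis
      then have "dist (f y') (f s) < \<delta>/2" using d s S(2) by blast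
      moreover have "dist (f y') y < \<delta>/2" using ch_step e'_def by auto
      ultimately have "dist y (f s) < \<delta>" using dist_triangle[of y "f s" "f y'"] by (simp add: dist_commute)
      then show ?thesis unfolding nbhd_def using s by auto
    qed
    then show ?thesis using e'_def e \<open>\<delta>>0\<close> by (intro exI[of _ e']) auto
  qed
  then show ?thesis unfolding stab_def using cl S by auto
qed

lemma stab_Inter:
  assumes ne: "Ch \<noteq> {}" and st: "\<forall>S\<in>Ch. stab f M S" and chn: "\<forall>X\<in>Ch. \<forall>Y\<in>Ch. X \<subseteq> Y \<or> Y \<subseteq> X"
  shows "stab f M (\<Inter>Ch)"
proof -
  have cl: "\<And>T. T \<in> Ch \<Longrightarrow> closed T" using st unfolding stab_def by auto
  have sub: "\<And>T. T \<in> Ch \<Longrightarrow> T \<subseteq> M" using st unfolding stab_def by auto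
  have nem: "\<And>T. T \<in> Ch \<Longrightarrow> T \<noteq> {}" using st unfolding stab_def by auto
  have Mne: "M \<noteq> {}" using ne sub nem by blast
  have fin: "M \<inter> \<Inter>F' \<noteq> {}" if F': "finite F'" "F' \<subseteq> Ch" for F'
  proof (cases "F' = {}")
    case True then show ?thesis using Mne by simp
  next
    case False
    then obtain m where "m \<in> F'" "\<forall>X\<in>F'. m \<subseteq> X"
      using finite_chain_min[OF F'(1) False] chn F'(2) by (meson subsetD)
    then have mC: "m \<in> Ch" "m \<subseteq> \<Inter>F'" using F' by auto
    then have "m \<subseteq> M \<inter> \<Inter>F'" using sub by auto
    then show ?thesis using nem[OF mC(1)] by blast
  qed
  have nei: "\<Inter>Ch \<noteq> {}" using compact_imp_fip[OF cpt cl fin] by auto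
  have "\<exists>e>0. \<forall>x\<in>\<Inter>Ch. \<forall>y. ch f M e x y \<longrightarrow> y \<in> nbhd (\<Inter>Ch) \<delta>" if "\<delta> > 0" for \<delta>
  proof -
    define N where "N = nbhd (\<Inter>Ch) (\<delta>/2)"
    have "\<exists>S\<in>Ch. S \<subseteq> N"
    proof (rule ccontr)
      assume nn: "\<not> ?thesis"
      have "M \<inter> (\<Inter>i\<in>Ch. i - N) \<noteq> {}"
      proof (rule compact_imp_fip_image[OF cpt])
        show "closed (i - N)" if "i \<in> Ch" for i unfolding N_def by (intro closed_Diff cl that open_nbhd)
        fix I' assume I': "finite I'" "I' \<subseteq> Ch"
        show "M \<inter> (\<Inter>i\<in>I'. i - N) \<noteq> {}"
        proof (cases "I' = {}")
          case True then show ?thesis using Mne by simp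
        next
          case False
          then obtain m where m: "m \<in> I'" "\<forall>X\<in>I'. m \<subseteq> X"
            using finite_chain_min[OF I'(1) False] chn I'(2) by (meson subsetD)
          have "\<not> m \<subseteq> N" using nn m I' by blast
          then obtain y where "y \<in> m" "y \<notin> N" by blast
          then show ?thesis using m sub I' by blast
        qed
      qed
      then obtain y where "y \<in> \<Inter>Ch" "y \<notin> N" using ne by auto
      then show False using N_def nbhd_self[of "\<delta>/2" "\<Inter>Ch"] \<open>\<delta>>0\<close> by auto
    qed
    then obtain S where S: "S \<in> Ch" "S \<subseteq> N" by blast
    then obtain e where e: "e > 0" "\<forall>x\<in>S. \<forall>y. ch f M e x y \<longrightarrow> y \<in> nbhd S (\<delta>/2)"
      using st \<open>\<delta>>0\<close> unfolding stab_def by (meson half_gt_zero)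
    have "y \<in> nbhd (\<Inter>Ch) \<delta>" if "x \<in> \<Inter>Ch" "ch f M e x y" for x y
    proof -
      have "y \<in> nbhd S (\<delta>/2)" using e that S by blast
      then obtain s where "s \<in> S" "dist y s < \<delta>/2" unfolding nbhd_def by auto
      then obtain a where "a \<in> \<Inter>Ch" "dist s a < \<delta>/2" using S N_def unfolding nbhd_def by blast
      moreover have "dist y a < \<delta>" using \<open>dist y s < \<delta>/2\<close> \<open>dist s a < \<delta>/2\<close> dist_triangle[of y a s] by linarith
      ultimately show ?thesis unfolding nbhd_def by auto
    qed
    then show ?thesis using e by blast
  qed
  moreover have "closed (\<Inter>Ch)" using cl by auto
  moreover have "\<Inter>Ch \<subseteq> M" using sub ne by blast
  moreover have "f ` \<Inter>Ch \<subseteq> \<Inter>Ch" using st unfolding stab_def by blast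
  ultimately show ?thesis unfolding stab_def using nei by auto
qed

lemma stab_minimal:
  assumes T: "stab f M T"
  shows "\<exists>S0. stab f M S0 \<and> S0 \<subseteq> T \<and> (\<forall>S. stab f M S \<and> S \<subseteq> S0 \<longrightarrow> S = S0)"
proof -
  define A where "A = (\<lambda>S. M - S) ` {S. stab f M S \<and> S \<subseteq> T}"
  have "\<forall>C\<in>chains A. \<exists>U\<in>A. \<forall>X\<in>C. X \<subseteq> U"
  proof
    fix C assume C: "C \<in> chains A"
    then have CA: "C \<subseteq> A" and cc: "\<forall>X\<in>C. \<forall>Y\<in>C. X \<subseteq> Y \<or> Y \<subseteq> X"
      unfolding chains_def chain_subset_def by auto
    show "\<exists>U\<in>A. \<forall>X\<in>C. X \<subseteq> U"
    proof (cases "C = {}")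
      case True then show ?thesis using T A_def by auto
    next
      case False
      define Ch where "Ch = (\<lambda>U. M - U) ` C"
      have Ch1: "\<forall>S\<in>Ch. stab f M S \<and> S \<subseteq> T"
      proof
        fix S assume "S \<in> Ch"
        then obtain U where "U \<in> C" "S = M - U" using Ch_def by auto
        then obtain S' where "stab f M S'" "S' \<subseteq> T" "U = M - S'" using CA A_def by auto
        moreover have "S' \<subseteq> M" using \<open>stab f M S'\<close> unfolding stab_def by auto
        ultimately show "stab f M S \<and> S \<subseteq> T" using \<open>S = M - U\<close> by (simp add: double_diff)
      qed
      have chn: "\<forall>X\<in>Ch. \<forall>Y\<in>Ch. X \<subseteq> Y \<or> Y \<subseteq> X" using cc Ch_def by auto
      have "Ch \<noteq> {}" using False Ch_def by auto
      then have st: "stab f M (\<Inter>Ch)" "\<Inter>Ch \<subseteq> T" using stab_Inter[OF _ _ chn] Ch1 by auto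
      have "M - \<Inter>Ch \<in> A" using st A_def by auto
      moreover have "\<forall>X\<in>C. X \<subseteq> M - \<Inter>Ch"
      proof
        fix X assume "X \<in> C"
        then have "X \<subseteq> M" using CA A_def by auto
        moreover have "M - X \<in> Ch" using \<open>X \<in> C\<close> Ch_def by auto
        ultimately show "X \<subseteq> M - \<Inter>Ch" by blast
      qed
      ultimately show ?thesis by blast
    qed
  qed
  then obtain U0 where U0: "U0 \<in> A" "\<forall>X\<in>A. U0 \<subseteq> X \<longrightarrow> X = U0" using Zorn_Lemma2 by blast
  then obtain S0 where S0: "stab f M S0" "S0 \<subseteq> T" "U0 = M - S0" using A_def by auto
  have "S = S0" if "stab f M S" "S \<subseteq> S0" for S
  proof -
    have "M - S \<in> A" using that S0 A_def by auto
    moreover have "U0 \<subseteq> M - S" using that S0 by auto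
    ultimately have "M - S = M - S0" using U0 S0 by auto
    moreover have "S \<subseteq> M" "S0 \<subseteq> M" using that S0 unfolding stab_def by auto
    ultimately show ?thesis by (metis double_diff order_refl)
  qed
  then show ?thesis using S0 by blast
qed

end



context dyn
begin

lemma Om_sub: "Om f M x \<subseteq> M"
proof
  fix y assume "y \<in> Om f M x"
  then have "ch2 f M 1 x y" unfolding Om_def by auto
  then show "y \<in> M" unfolding ch2_def by auto
qed

lemma f_in_Om: "x \<in> M \<Longrightarrow> f x \<in> Om f M x"
  unfolding Om_def ch2_def by (auto intro: ch_refl fM)

lemma Om_fwd: "y \<in> Om f M x \<Longrightarrow> f y \<in> Om f M x"
proof -
  assume y: "y \<in> Om f M x"
  then have yM: "y \<in> M" using Om_sub by auto
  have "ch2 f M e x (f y)" if e: "e > 0" for e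
  proof -
    have "ch2 f M e x y" using y e unfolding Om_def by auto
    then have "ch f M e x y" by (rule ch2_ch)
    then show ?thesis unfolding ch2_def using yM fM e by (intro exI[of _ y]) auto
  qed
  then show ?thesis unfolding Om_def by auto
qed

lemma ch2_closure:
  assumes "y \<in> M" "y \<in> closure {y. ch2 f M e x y}" "e > 0"
  shows "ch2 f M (2*e) x y"
proof -
  obtain y' where y': "ch2 f M e x y'" "dist y' y < e" using assms closure_approachable by blast
  then obtain z where z: "ch f M e x z" "dist (f z) y' < e" unfolding ch2_def by auto
  have "dist (f z) y < 2*e" using z y' dist_triangle[of "f z" y y'] by linarith
  moreover have "ch f M (2*e) x z" using z ch_mono assms(3) by fastforce
  ultimately show ?thesis unfolding ch2_def using assms by auto
qed

lemma Om_closed: "closed (Om f M x)"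
proof -
  have "closure (Om f M x) \<subseteq> Om f M x"
  proof
    fix y assume y: "y \<in> closure (Om f M x)"
    have yM: "y \<in> M" using y closure_minimal[OF Om_sub closedM] by auto
    show "y \<in> Om f M x" unfolding Om_def
    proof (intro CollectI allI impI)
      fix e :: real assume e: "e > 0"
      have "Om f M x \<subseteq> {y. ch2 f M (e/2) x y}" unfolding Om_def using e by auto
      then have "y \<in> closure {y. ch2 f M (e/2) x y}" using y closure_mono by blast
      then show "ch2 f M e x y" using ch2_closure[OF yM] e by fastforce
    qed
  qed
  then show ?thesis using closure_subset_eq by blast
qed

lemma Om_stab:
  assumes xM: "x \<in> M"
  shows "stab f M (Om f M x)"
proof -
  have "\<exists>e>0. \<forall>a\<in>Om f M x. \<forall>y. ch f M e a y \<longrightarrow> y \<in> nbhd (Om f M x) \<delta>" if "\<delta> > 0" for \<delta>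
  proof -
    define N where "N = nbhd (Om f M x) (\<delta>/2)"
    define P where "P n = {y. ch2 f M (inverse (real (Suc n))) x y}" for n
    have Pmono: "P m \<subseteq> P n" if "n \<le> m" for m n
    proof
      fix y assume "y \<in> P m"
      moreover have "inverse (real (Suc m)) \<le> inverse (real (Suc n))" using that by (simp add: field_simps)
      ultimately show "y \<in> P n" unfolding P_def using ch2_mono by blast
    qed
    have "\<exists>n. P n \<subseteq> N"
    proof (rule ccontr)
      assume nn: "\<not> ?thesis"
      have "M \<inter> (\<Inter>n\<in>UNIV. closure (P n) - N) \<noteq> {}"
      proof (rule compact_imp_fip_image[OF cpt])
        show "closed (closure (P n) - N)" for n unfolding N_def by (intro closed_Diff closed_closure open_nbhd)
        fix I' :: "nat set" assume I': "finite I'" "I' \<subseteq> UNIV"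
        obtain y where y: "y \<in> P (Max I')" "y \<notin> N" using nn by blast
        have "y \<in> M" using y unfolding P_def ch2_def by auto
        moreover have "y \<in> closure (P n) - N" if "n \<in> I'" for n
        proof -
          have "y \<in> P n" using y(1) Pmono[of n "Max I'"] Max_ge[OF I'(1) that] by blast
          then show ?thesis using y(2) closure_subset[of "P n"] by blast
        qed
        ultimately show "M \<inter> (\<Inter>n\<in>I'. closure (P n) - N) \<noteq> {}" by blast
      qed
      then obtain y where y: "y \<in> M" "\<And>n. y \<in> closure (P n)" "y \<notin> N" by blast
      have "y \<in> Om f M x" unfolding Om_def
      proof (intro CollectI allI impI)
        fix e :: real assume e: "e > 0"
        obtain n where n: "inverse (real (Suc n)) < e/2" using inv_Suc_small[of "e/2"] e by auto
        have "ch2 f M (2 * inverse (real (Suc n))) x y"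
          using ch2_closure[OF y(1)] y(2)[of n] unfolding P_def by simp
        then show "ch2 f M e x y" using ch2_mono n by fastforce
      qed
      then show False using y(3) N_def nbhd_self[of "\<delta>/2"] \<open>\<delta>>0\<close> by auto
    qed
    then obtain n where n: "P n \<subseteq> N" by blast
    have "y \<in> nbhd (Om f M x) \<delta>" if "a \<in> Om f M x" "ch f M (inverse (real (Suc n))) a y" for a y
    proof -
      have "ch2 f M (inverse (real (Suc n))) x a" using that(1) unfolding Om_def by auto
      then have "y \<in> P n" unfolding P_def using ch2_ch_trans that(2) by blast
      then show ?thesis using n N_def nbhd_mono[of "\<delta>/2" \<delta>] \<open>\<delta>>0\<close> by auto
    qed
    then show ?thesis by (intro exI[of _ "inverse (real (Suc n))"]) auto
  qed
  moreover have "Om f M x \<noteq> {}" using f_in_Om[OF xM] by auto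
  moreover have "f ` Om f M x \<subseteq> Om f M x" using Om_fwd by auto
  ultimately show ?thesis unfolding stab_def using Om_closed Om_sub by auto
qed

lemma Om_sub_stab:
  assumes "stab f M S" "x \<in> S"
  shows "Om f M x \<subseteq> S"
proof
  fix y assume y: "y \<in> Om f M x"
  have "\<exists>s\<in>S. dist s y < \<delta>" if dp: "\<delta> > 0" for \<delta>
  proof -
    obtain e where e: "e > 0" "\<forall>x\<in>S. \<forall>y. ch f M e x y \<longrightarrow> y \<in> nbhd S \<delta>"
      using assms(1) dp unfolding stab_def by blast
    have "ch f M e x y" using y e(1) unfolding Om_def using ch2_ch by blast
    then have "y \<in> nbhd S \<delta>" using e assms(2) by blast
    then show ?thesis unfolding nbhd_def by (auto simp: dist_commute)
  qed
  then have "y \<in> closure S" using closure_approachable by blast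
  then show "y \<in> S" using assms(1) unfolding stab_def by (simp add: closure_closed)
qed

lemma ct_proj:
  assumes st: "stab f M S" and e: "e > 0"
  shows "\<exists>e'>0. \<forall>x\<in>S. \<forall>y\<in>S. ch2 f M e' x y \<longrightarrow> ch f S e x y"
proof -
  have SM: "S \<subseteq> M" using st unfolding stab_def by auto
  obtain \<eta>0 where \<eta>0: "\<eta>0 > 0" "\<forall>x\<in>M. \<forall>x'\<in>M. dist x' x < \<eta>0 \<longrightarrow> dist (f x') (f x) < e/3"
    using uf[of "e/3"] e by auto
  define \<eta> where "\<eta> = min \<eta>0 (e/3)"
  have \<eta>: "\<eta> > 0" using \<eta>0 e \<eta>_def by auto
  obtain e0 where e0: "e0 > 0" "\<forall>x\<in>S. \<forall>y. ch f M e0 x y \<longrightarrow> y \<in> nbhd S \<eta>"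
    using st \<eta> unfolding stab_def by blast
  define e' where "e' = min e0 (e/3)"
  have e': "e' > 0" using e0 e e'_def by auto
  have proj: "ch f M e' x z \<Longrightarrow> x \<in> S \<Longrightarrow> \<exists>z'\<in>S. dist z z' < \<eta> \<and> ch f S e x z'" for x z
  proof (induction rule: ch.induct)
    case (ch_refl x0)
    then show ?case using \<eta> by (intro bexI[of _ x0]) (auto intro: ch.ch_refl)
  next
    case (ch_step x y w)
    then have x: "x \<in> S" by simp
    from ch_step obtain z' where z': "z' \<in> S" "dist y z' < \<eta>" "ch f S e x z'" by blast
    have "ch f M e' x w" using ch_step.hyps(1,2,3) by (rule ch.ch_step)
    then have "ch f M e0 x w" using ch_mono[of f M e' x w e0 M] e'_def by auto
    then have "w \<in> nbhd S \<eta>" using e0 x by blast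
    then obtain w' where w': "w' \<in> S" "dist w w' < \<eta>" unfolding nbhd_def by auto
    have yM: "y \<in> M" using ch_in[OF ch_step.hyps(1)] by blast
    have "dist (f z') (f y) < e/3" using \<eta>0 z' yM SM \<eta>_def by (simp add: dist_commute subsetD)
    moreover have "dist (f y) w < e/3" using ch_step e'_def by auto
    moreover have "dist w w' < e/3" using w' \<eta>_def by auto
    ultimately have "dist (f z') w' < e"
      using dist_triangle[of "f z'" w' w] dist_triangle[of "f z'" w "f y"] by linarith
    then have "ch f S e x w'" using z'(3) w'(1) by (rule ch.ch_step[rotated -1])
    then show ?case using w' by blast
  qed
  have "ch f S e x y" if xy: "x \<in> S" "y \<in> S" "ch2 f M e' x y" for x y
  proof -
    obtain z where z: "ch f M e' x z" "dist (f z) y < e'" using xy unfolding ch2_def by auto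
    obtain z' where z': "z' \<in> S" "dist z z' < \<eta>" "ch f S e x z'" using proj[OF z(1) xy(1)] by blast
    have zM: "z \<in> M" using ch_in[OF z(1)] by blast
    have "dist (f z') (f z) < e/3" using \<eta>0 z' zM SM \<eta>_def by (simp add: dist_commute subsetD)
    moreover have "e' \<le> e/3" by (simp add: e'_def)
    ultimately have "dist (f z') y < e" using z e dist_triangle[of "f z'" y "f z"] by linarith
    then show ?thesis using z'(3) xy(2) by (rule ch.ch_step[rotated -1])
  qed
  then show ?thesis using e' by blast
qed

lemma minimal_crh:
  assumes st: "stab f M S0" and mn: "\<forall>S. stab f M S \<and> S \<subseteq> S0 \<longrightarrow> S = S0"
  shows "crh_attractor M f S0"
proof -
  have S0: "closed S0" "S0 \<subseteq> M" "S0 \<noteq> {}" "f ` S0 \<subseteq> S0"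
    and stb: "\<forall>\<delta>>0. \<exists>e>0. \<forall>x\<in>S0. \<forall>y. ch f M e x y \<longrightarrow> y \<in> nbhd S0 \<delta>"
    using st unfolding stab_def by auto
  have inv: "f ` S0 = S0" using mn stab_image[OF st] S0(4) by auto
  have Om: "Om f M x = S0" if "x \<in> S0" for x
    using mn Om_stab Om_sub_stab[OF st that] that S0(2) by blast
  have "ch f S0 e x y" if exy: "e > 0" "x \<in> S0" "y \<in> S0" for e x y
  proof -
    obtain e' where e': "e' > 0" "\<forall>x\<in>S0. \<forall>y\<in>S0. ch2 f M e' x y \<longrightarrow> ch f S0 e x y"
      using ct_proj[OF st exy(1)] by blast
    have "y \<in> Om f M x" using Om exy by auto
    then have "ch2 f M e' x y" using e' unfolding Om_def by auto
    then show ?thesis using e' exy by blast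
  qed
  then have "chain_transitive M f S0" unfolding chain_transitive_iff invariant_set_def using S0 inv by auto
  moreover have "stable_set M f S0" unfolding stable_set_iff invariant_set_def using S0 inv stb by auto
  ultimately show ?thesis unfolding crh_attractor_def using S0 by auto
qed

lemma exists_crh:
  assumes "stab f M T"
  shows "\<exists>A. crh_attractor M f A \<and> A \<subseteq> T"
  using stab_minimal[OF assms] minimal_crh by blast

end



context dyn
begin

lemma recurrent_near:
  assumes e: "e > 0"
  shows "\<exists>\<theta>>0. \<forall>p\<in>M. \<forall>p'\<in>M. p \<in> Om f M p \<and> dist p' p < \<theta> \<longrightarrow> ch f M e p p' \<and> ch f M e p' p"
proof -
  obtain d where d: "d > 0" "\<forall>x\<in>M. \<forall>x'\<in>M. dist x' x < d \<longrightarrow> dist (f x') (f x) < e/2"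
    using uf[of "e/2"] e by auto
  define \<theta> where "\<theta> = min d (e/2)"
  have "ch f M e p p' \<and> ch f M e p' p" if pp: "p \<in> M" "p' \<in> M" "p \<in> Om f M p" "dist p' p < \<theta>" for p p'
  proof -
    have "ch2 f M (e/2) p p" using pp(3) e unfolding Om_def by auto
    then obtain z where z: "ch f M (e/2) p z" "dist (f z) p < e/2" unfolding ch2_def by auto
    have "dist p' p < e/2" using pp(4) \<theta>_def by auto
    then have "dist (f z) p' < e" using z(2) dist_triangle[of "f z" p' p] by (simp add: dist_commute)
    moreover have "ch f M e p z" using ch_mono[OF z(1), of e M] e by auto
    ultimately have c1: "ch f M e p p'" using pp(2) ch.ch_step by metis
    have "dist p' p < d" using pp(4) \<theta>_def by auto
    then have fd: "dist (f p') (f p) < e/2" using d(2) pp(1,2) by blast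
    have "ch2 f M (e/2 + e/2) p' p" using ch_perturb[OF z(1) pp(2) fd pp(1) z(2)] e by simp
    then have "ch f M e p' p" using ch2_ch by simp
    then show ?thesis using c1 by auto
  qed
  moreover have "\<theta> > 0" using d e \<theta>_def by auto
  ultimately show ?thesis by blast
qed

lemma ct_recurrent:
  assumes ct: "chain_transitive M f A" and a: "a \<in> A"
  shows "a \<in> Om f M a"
proof -
  have A: "A \<subseteq> M" "f ` A = A" "\<forall>e>0. \<forall>x\<in>A. \<forall>y\<in>A. ch f A e x y"
    using ct unfolding chain_transitive_iff invariant_set_def by auto
  have "ch2 f M e a a" if e: "e > 0" for e
  proof -
    have "f a \<in> A" using A a by blast
    then have "ch f A e (f a) a" using A e a by blast
    then have "ch f M e (f a) a" using ch_mono A by blast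
    then show ?thesis using ch_first_step a A e by force
  qed
  then show ?thesis unfolding Om_def by auto
qed

lemma nonrec:
  assumes conn: "connected M" and crh: "crh_attractor M f C" and CM: "C \<noteq> M" and \<eta>: "\<eta> > 0"
  shows "\<exists>p\<in>M - C. p \<in> nbhd C \<eta> \<and> p \<notin> Om f M p"
proof (rule ccontr)
  assume H0: "\<not> ?thesis"
  have ctC: "chain_transitive M f C" and stC: "stable_set M f C" and Cne: "C \<noteq> {}"
    using crh unfolding crh_attractor_def by auto
  have C: "closed C" "C \<subseteq> M" and stb: "\<forall>\<delta>>0. \<exists>e>0. \<forall>x\<in>C. \<forall>y. ch f M e x y \<longrightarrow> y \<in> nbhd C \<delta>"
    using stC unfolding stable_set_iff invariant_set_def by auto
  have H: "p \<in> Om f M p" if "p \<in> M" "p \<in> nbhd C \<eta>" for p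
    using H0 that ct_recurrent[OF ctC] by blast
  obtain z0 where z0: "z0 \<in> M" "z0 \<notin> C" using CM C by blast
  define r0 where "r0 = infdist z0 C"
  have r0: "r0 > 0" using infdist_pos_not_in_closed[OF C(1) Cne z0(2)] r0_def by auto
  define r where "r = min \<eta> r0"
  have r: "r > 0" "r \<le> \<eta>" "r \<le> r0" using r0 \<eta> r_def by auto
  obtain e where e: "e > 0" "\<forall>x\<in>C. \<forall>y. ch f M e x y \<longrightarrow> y \<in> nbhd C (r/2)"
    using stb r by (meson half_gt_zero)
  obtain c0 where c0: "c0 \<in> C" using Cne by blast
  define Q where "Q = {q \<in> M. ch f M e c0 q \<and> ch f M e q c0}"
  obtain \<theta> where \<theta>: "\<theta> > 0" "\<forall>p\<in>M. \<forall>p'\<in>M. p \<in> Om f M p \<and> dist p' p < \<theta> \<longrightarrow> ch f M e p p' \<and> ch f M e p' p"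
    using recurrent_near[OF e(1)] by blast
  have QM: "Q \<subseteq> M" using Q_def by auto
  have Qnb: "Q \<subseteq> nbhd C (r/2)" using Q_def e c0 by blast
  have Qrec: "q \<in> Om f M q" if "q \<in> Q" for q
    using H[of q] that QM Qnb nbhd_mono[of "r/2" \<eta> C] r by auto
  have "openin (top_of_set M) Q"
    unfolding openin_euclidean_subtopology_iff
  proof (intro conjI ballI QM)
    fix q assume q: "q \<in> Q"
    have "p' \<in> Q" if "p' \<in> M" "dist p' q < \<theta>" for p'
    proof -
      have "ch f M e q p'" "ch f M e p' q" using \<theta>(2) that Qrec[OF q] q QM by blast+
      then show ?thesis using q Q_def that(1) ch_trans by blast
    qed
    then show "\<exists>e>0. \<forall>x'\<in>M. dist x' q < e \<longrightarrow> x' \<in> Q" using \<theta>(1) by blast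
  qed
  moreover have "closed Q"
  proof -
    have "closure Q \<subseteq> Q"
    proof
      fix y assume y: "y \<in> closure Q"
      have yM: "y \<in> M" using y closure_minimal[OF QM closedM] by auto
      obtain q where q: "q \<in> Q" "dist q y < r/2" using y closure_approachable r by (meson half_gt_zero)
      obtain c where c: "c \<in> C" "dist q c < r/2" using q Qnb unfolding nbhd_def by blast
      have "dist y c < r" using q c dist_triangle[of y c q] by (simp add: dist_commute)
      then have "y \<in> nbhd C \<eta>" using c r unfolding nbhd_def by force
      then have yr: "y \<in> Om f M y" using H yM by blast
      obtain q' where q': "q' \<in> Q" "dist q' y < \<theta>" using y closure_approachable \<theta> by blast
      have "ch f M e y q'" "ch f M e q' y" using \<theta>(2) yr yM q' QM by blast+
      then show "y \<in> Q" using q' Q_def yM ch_trans by blast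
    qed
    then show ?thesis using closure_subset_eq by blast
  qed
  then have "closedin (top_of_set M) Q" using closed_subset QM by blast
  ultimately have "Q = {} \<or> Q = M" using conn unfolding connected_clopen by blast
  moreover have "c0 \<in> Q" using Q_def c0 C by (auto intro: ch_refl)
  moreover have "z0 \<notin> Q"
  proof
    assume "z0 \<in> Q"
    then obtain c where c: "c \<in> C" "dist z0 c < r/2" using Qnb unfolding nbhd_def by blast
    have "r0 \<le> dist z0 c" using infdist_le[OF c(1)] r0_def by auto
    then show False using c r by auto
  qed
  ultimately show False using z0 by blast
qed

lemma attr_near:
  assumes conn: "connected M" and rc: "reversible_core M f C" and CM: "C \<noteq> M" and \<delta>: "\<delta> > 0"
  shows "\<exists>A. dissipative_attractor M f A \<and> A \<subseteq> nbhd C \<delta> \<and> A \<inter> C = {}"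
proof -
  have crh: "crh_attractor M f C" and nd: "\<not> (\<exists>x\<in>M - C. \<forall>e>0. \<exists>y\<in>C. ch f M e x y)"
    using rc unfolding reversible_core_def dissipative_iff by auto
  have C: "C \<subseteq> M" and stb: "\<forall>\<delta>>0. \<exists>e>0. \<forall>x\<in>C. \<forall>y. ch f M e x y \<longrightarrow> y \<in> nbhd C \<delta>"
    using crh unfolding crh_attractor_def stable_set_iff invariant_set_def by auto
  obtain e0 where e0: "e0 > 0" "\<forall>x\<in>C. \<forall>y. ch f M e0 x y \<longrightarrow> y \<in> nbhd C \<delta>" using stb \<delta> by blast
  obtain d where d: "d > 0" "\<forall>x\<in>M. \<forall>x'\<in>M. dist x' x < d \<longrightarrow> dist (f x') (f x) < e0/2"
    using uf[of "e0/2"] e0 by auto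
  obtain p where p: "p \<in> M" "p \<notin> C" "p \<in> nbhd C d" "p \<notin> Om f M p"
    using nonrec[OF conn crh CM d(1)] by blast
  obtain c where c: "c \<in> C" "dist p c < d" using p unfolding nbhd_def by auto
  have fc: "dist (f c) (f p) < e0/2" using d c p C by (metis dist_commute subsetD)
  have OmC: "Om f M p \<subseteq> nbhd C \<delta>"
  proof
    fix y assume y: "y \<in> Om f M p"
    then have "ch2 f M (e0/2) p y" using e0 unfolding Om_def by auto
    then obtain z where z: "ch f M (e0/2) p z" "dist (f z) y < e0/2" "y \<in> M" unfolding ch2_def by auto
    have cM: "c \<in> M" using c C by blast
    have "ch2 f M (e0/2 + e0/2) c y" using ch_perturb[OF z(1) cM fc z(3) z(2)] e0 by simp
    then have "ch f M e0 c y" using ch2_ch by simp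
    then show "y \<in> nbhd C \<delta>" using e0 c by blast
  qed
  obtain A where A: "crh_attractor M f A" "A \<subseteq> Om f M p" using exists_crh[OF Om_stab[OF p(1)]] by blast
  have reach: "ch f M e p a" if "a \<in> A" "e > 0" for a e
    using A that unfolding Om_def using ch2_ch by blast
  have "A \<inter> C = {}"
  proof (rule ccontr)
    assume "A \<inter> C \<noteq> {}"
    then obtain a where "a \<in> A" "a \<in> C" by blast
    then show False using nd p reach by blast
  qed
  moreover have "p \<notin> A" using ct_recurrent p(4) A(1) unfolding crh_attractor_def by blast
  moreover have "A \<noteq> {}" using A unfolding crh_attractor_def by auto
  ultimately have "dissipative_attractor M f A"
    unfolding dissipative_iff using A(1) p(1) reach by blast
  then show ?thesis using A OmC \<open>A \<inter> C = {}\<close> by blast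
qed

lemma rev_fg:
  assumes e: "e > 0"
  shows "\<exists>\<eta>>0. \<forall>S x y. S \<subseteq> M \<longrightarrow> ch f S \<eta> x y \<longrightarrow> ch g S e y x"
proof -
  obtain d where d: "d > 0" "\<forall>x\<in>M. \<forall>x'\<in>M. dist x' x < d \<longrightarrow> dist (g x') (g x) < e"
    using ug e by blast
  have "ch g S e y x" if S: "S \<subseteq> M" and c: "ch f S d x y" for S x y
    using c
  proof (induction rule: ch.induct)
    case (ch_refl x) then show ?case by (rule ch.ch_refl)
  next
    case (ch_step x y z)
    have yM: "y \<in> M" using ch_in[OF ch_step.hyps(1)] S by blast
    have zM: "z \<in> M" using ch_step.hyps(2) S by blast
    have "dist z (f y) < d" using ch_step.hyps(3) by (simp add: dist_commute)
    then have "dist (g z) (g (f y)) < e" using d(2) zM fM[OF yM] by blast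
    then have "dist (g z) y < e" using gf[OF yM] by simp
    then show ?case using ch_cons[OF ch_step.hyps(2) _ ch_step.IH] by blast
  qed
  then show ?thesis using d by blast
qed

lemma rev_gf:
  assumes e: "e > 0"
  shows "\<exists>\<eta>>0. \<forall>S x y. S \<subseteq> M \<longrightarrow> ch g S \<eta> x y \<longrightarrow> ch f S e y x"
proof -
  obtain d where d: "d > 0" "\<forall>x\<in>M. \<forall>x'\<in>M. dist x' x < d \<longrightarrow> dist (f x') (f x) < e"
    using uf e by blast
  have "ch f S e y x" if S: "S \<subseteq> M" and c: "ch g S d x y" for S x y
    using c
  proof (induction rule: ch.induct)
    case (ch_refl x) then show ?case by (rule ch.ch_refl)
  next
    case (ch_step x y z)
    have yM: "y \<in> M" using ch_in[OF ch_step.hyps(1)] S by blast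
    have zM: "z \<in> M" using ch_step.hyps(2) S by blast
    have "dist z (g y) < d" using ch_step.hyps(3) by (simp add: dist_commute)
    then have "dist (f z) (f (g y)) < e" using d(2) zM gM[OF yM] by blast
    then have "dist (f z) y < e" using fg[OF yM] by simp
    then show ?case using ch_cons[OF ch_step.hyps(2) _ ch_step.IH] by blast
  qed
  then show ?thesis using d by blast
qed

end



context dyn
begin

lemma rev_core:
  assumes rc: "reversible_core M f C"
  shows "reversible_core M g C"
proof -
  have crh: "crh_attractor M f C" and nd: "\<not> (\<exists>x\<in>M - C. \<forall>e>0. \<exists>y\<in>C. ch f M e x y)"
    using rc unfolding reversible_core_def dissipative_iff by auto
  have Cne: "C \<noteq> {}" and C: "closed C" "C \<subseteq> M" "f ` C = C"
    and ctf: "\<forall>e>0. \<forall>x\<in>C. \<forall>y\<in>C. ch f C e x y"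
    and stf: "\<forall>\<delta>>0. \<exists>e>0. \<forall>x\<in>C. \<forall>y. ch f M e x y \<longrightarrow> y \<in> nbhd C \<delta>"
    using crh unfolding crh_attractor_def stable_set_iff chain_transitive_iff invariant_set_def by auto
  have gC: "g ` C = C"
  proof -
    have "g ` C = g ` (f ` C)" using C by simp
    also have "\<dots> = C" unfolding image_image using gf C(2) by (simp add: subset_eq)
    finally show ?thesis .
  qed
  have ctg: "ch g C e x y" if exy: "e > 0" "x \<in> C" "y \<in> C" for e x y
  proof -
    obtain \<eta> where \<eta>: "\<eta> > 0" "\<forall>S x y. S \<subseteq> M \<longrightarrow> ch f S \<eta> x y \<longrightarrow> ch g S e y x"
      using rev_fg[OF exy(1)] by blast
    have "ch f C \<eta> y x" using ctf \<eta>(1) exy by blast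
    then show ?thesis using \<eta>(2) C(2) by blast
  qed
  have stg: "\<exists>e>0. \<forall>x\<in>C. \<forall>y. ch g M e x y \<longrightarrow> y \<in> nbhd C \<delta>" if \<delta>: "\<delta> > 0" for \<delta>
  proof (rule ccontr)
    assume "\<not> ?thesis"
    then have nn: "\<forall>e>0. \<exists>x\<in>C. \<exists>y. ch g M e x y \<and> y \<notin> nbhd C \<delta>" by auto
    have "\<exists>x y. x \<in> C \<and> ch g M (inverse (real (Suc n))) x y \<and> y \<notin> nbhd C \<delta>" for n
    proof -
      have "inverse (real (Suc n)) > 0" by simp
      then show ?thesis using nn by blast
    qed
    then obtain X Y where XY: "\<And>n. X n \<in> C" "\<And>n. ch g M (inverse (real (Suc n))) (X n) (Y n)"
      "\<And>n. Y n \<notin> nbhd C \<delta>" by metis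
    have YM: "Y n \<in> M" for n using ch_in[OF XY(2)] by blast
    obtain p r where pr: "p \<in> M" "strict_mono (r :: nat \<Rightarrow> nat)" "(Y \<circ> r) \<longlonglongrightarrow> p"
      using seq_compactE[OF compact_imp_seq_compact[OF cpt], of Y] YM by blast
    have lim: "\<exists>no. \<forall>n\<ge>no. dist (Y (r n)) p < \<rho>" if "\<rho> > 0" for \<rho>
      using pr(3) that unfolding lim_sequentially by auto
    have pC: "p \<notin> C"
    proof
      assume "p \<in> C"
      obtain no where "\<forall>n\<ge>no. dist (Y (r n)) p < \<delta>" using lim \<delta> by blast
      then have "Y (r no) \<in> nbhd C \<delta>" using \<open>p \<in> C\<close> unfolding nbhd_def by auto
      then show False using XY(3) by blast
    qed
    have "\<exists>y\<in>C. ch f M \<epsilon> p y" if \<epsilon>: "\<epsilon> > 0" for \<epsilon>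
    proof -
      obtain d where d: "d > 0" "\<forall>x\<in>M. \<forall>x'\<in>M. dist x' x < d \<longrightarrow> dist (f x') (f x) < \<epsilon>/2"
        using uf[of "\<epsilon>/2"] \<epsilon> by auto
      obtain \<eta> where \<eta>: "\<eta> > 0" "\<forall>S x y. S \<subseteq> M \<longrightarrow> ch g S \<eta> x y \<longrightarrow> ch f S (\<epsilon>/2) y x"
        using rev_gf[of "\<epsilon>/2"] \<epsilon> by auto
      obtain N1 where N1: "inverse (real (Suc N1)) < \<eta>" using inv_Suc_small \<eta>(1) by blast
      obtain N2 where N2: "\<forall>n\<ge>N2. dist (Y (r n)) p < d" using lim d(1) by blast
      define n where "n = max N1 N2"
      define m where "m = r n"
      have "n \<le> m" using seq_suble[OF pr(2)] m_def by auto
      then have "N1 \<le> m" using n_def by auto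
      then have "inverse (real (Suc m)) \<le> inverse (real (Suc N1))" by (simp add: field_simps)
      then have le: "inverse (real (Suc m)) \<le> \<eta>" using N1 by linarith
      have "ch g M \<eta> (X m) (Y m)" using ch_mono[OF XY(2)[of m] le, of M] by blast
      then have c1: "ch f M (\<epsilon>/2) (Y m) (X m)" using \<eta>(2) by blast
      have "dist p (Y m) < d" using N2 n_def m_def by (simp add: dist_commute)
      then have fd: "dist (f p) (f (Y m)) < \<epsilon>/2" using d(2) pr(1) YM by blast
      have XmC: "f (X m) \<in> C" using XY(1) C(3) by blast
      then have XmM: "f (X m) \<in> M" using C(2) by blast
      have "dist (f (X m)) (f (X m)) < \<epsilon>/2" using \<epsilon> by simp
      then have "ch2 f M (\<epsilon>/2 + \<epsilon>/2) p (f (X m))" using ch_perturb[OF c1 pr(1) fd XmM] \<epsilon> by simp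
      then have "ch f M \<epsilon> p (f (X m))" using ch2_ch by simp
      then show ?thesis using XmC by blast
    qed
    then show False using nd pr(1) pC by blast
  qed
  have ndg: "\<not> (\<exists>x\<in>M - C. \<forall>e>0. \<exists>y\<in>C. ch g M e x y)"
  proof
    assume "\<exists>x\<in>M - C. \<forall>e>0. \<exists>y\<in>C. ch g M e x y"
    then obtain p where p: "p \<in> M" "p \<notin> C" "\<forall>e>0. \<exists>y\<in>C. ch g M e p y" by blast
    have "\<exists>c\<in>C. dist c p < \<delta>" if \<delta>: "\<delta> > 0" for \<delta>
    proof -
      obtain e0 where e0: "e0 > 0" "\<forall>x\<in>C. \<forall>y. ch f M e0 x y \<longrightarrow> y \<in> nbhd C \<delta>" using stf \<delta> by blast
      obtain \<eta> where \<eta>: "\<eta> > 0" "\<forall>S x y. S \<subseteq> M \<longrightarrow> ch g S \<eta> x y \<longrightarrow> ch f S e0 y x"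
        using rev_gf[OF e0(1)] by blast
      obtain y where y: "y \<in> C" "ch g M \<eta> p y" using p(3) \<eta>(1) by blast
      then have "ch f M e0 y p" using \<eta>(2) by blast
      then have "p \<in> nbhd C \<delta>" using e0 y by blast
      then show ?thesis unfolding nbhd_def by (auto simp: dist_commute)
    qed
    then have "p \<in> closure C" using closure_approachable by blast
    then show False using p(2) C(1) by (simp add: closure_closed)
  qed
  have "crh_attractor M g C"
    unfolding crh_attractor_def chain_transitive_iff stable_set_iff invariant_set_def
    using Cne C gC ctg stg by blast
  then show ?thesis unfolding reversible_core_def dissipative_iff using ndg by blast
qed

end

lemma dyn_sym: "dyn M f g \<Longrightarrow> dyn M g f"
  unfolding dyn_def using homeomorphism_symD by blast

lemma gap:
  fixes A C :: "'a::metric_space set"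
  assumes "compact A" "closed C" "C \<noteq> {}" "A \<inter> C = {}"
  shows "\<exists>r>0. A \<inter> nbhd C r = {}"
proof (cases "A = {}")
  case True then show ?thesis by (intro exI[of _ 1]) auto
next
  case False
  have "continuous_on A (\<lambda>x. infdist x C)" by (intro continuous_intros)
  then obtain a0 where a0: "a0 \<in> A" "\<forall>y\<in>A. infdist a0 C \<le> infdist y C"
    using continuous_attains_inf[OF assms(1) False] by blast
  have pos: "infdist a0 C > 0" using infdist_pos_not_in_closed[OF assms(2,3)] a0 assms(4) by blast
  have "A \<inter> nbhd C (infdist a0 C) = {}"
  proof (rule ccontr)
    assume "\<not> ?thesis"
    then obtain a c where "a \<in> A" "c \<in> C" "dist a c < infdist a0 C" unfolding nbhd_def by auto
    then show False using a0(2) infdist_le[of c C a] by fastforce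
  qed
  then show ?thesis using pos by blast
qed



theorem theorem1:
  fixes M :: "'a::metric_space set" and f g :: "'a \<Rightarrow> 'a" and C :: "'a set"
  assumes "compact M" and "connected M"
    and "\<exists>D. countable D \<and> D \<subseteq> M \<and> M \<subseteq> closure D"
    and "homeomorphism M M f g"
    and "\<not> chain_transitive M f M"
    and "reversible_core M f C"
  shows "\<exists>A R :: nat \<Rightarrow> 'a set. \<exists>\<delta> :: nat \<Rightarrow> real.
           inj A \<and> inj R \<and>
           (\<forall>k. dissipative_attractor M f (A k)) \<and>
           (\<forall>k. dissipative_attractor M g (R k)) \<and>
           \<delta> \<longlonglongrightarrow> 0 \<and>
           (\<forall>k. A k \<subseteq> nbhd C (\<delta> k) \<and> R k \<subseteq> nbhd C (\<delta> k))"
proof -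
  have dF: "dyn M f g" using assms by unfold_locales auto
  interpret F: dyn M f g by (rule dF)
  interpret G: dyn M g f by (rule dyn_sym[OF dF])
  have rcg: "reversible_core M g C" using F.rev_core assms(6) by blast
  have crh: "crh_attractor M f C" using assms(6) unfolding reversible_core_def by auto
  have CM: "C \<noteq> M" using crh assms(5) unfolding crh_attractor_def by auto
  have Cne: "C \<noteq> {}" and Ccl: "closed C"
    using crh unfolding crh_attractor_def chain_transitive_def by auto
  define PA where "PA \<delta> A \<longleftrightarrow> dissipative_attractor M f A \<and> A \<subseteq> nbhd C \<delta> \<and> A \<inter> C = {}" for \<delta> A
  define PR where "PR \<delta> A \<longleftrightarrow> dissipative_attractor M g A \<and> A \<subseteq> nbhd C \<delta> \<and> A \<inter> C = {}" for \<delta> A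
  define AF where "AF \<delta> = (SOME A. PA \<delta> A)" for \<delta>
  define RF where "RF \<delta> = (SOME A. PR \<delta> A)" for \<delta>
  have AF: "PA \<delta> (AF \<delta>)" if "\<delta> > 0" for \<delta>
    unfolding AF_def PA_def using someI_ex[OF F.attr_near[OF assms(2,6) CM that]] by blast
  have RF: "PR \<delta> (RF \<delta>)" if "\<delta> > 0" for \<delta>
    unfolding RF_def PR_def using someI_ex[OF G.attr_near[OF assms(2) rcg CM that]] by blast
  have cpt_attr: "compact A \<and> A \<noteq> {}" if "crh_attractor M h A" for h A
  proof -
    have "closed A" "A \<subseteq> M" "A \<noteq> {}" using that
      unfolding crh_attractor_def chain_transitive_def invariant_set_def by auto
    then show ?thesis using assms(1) by (metis compact_Int_closed inf.absorb_iff2)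
  qed
  have AFc: "compact (AF \<delta>) \<and> AF \<delta> \<noteq> {}" if "\<delta> > 0" for \<delta>
    using AF[OF that] cpt_attr unfolding PA_def dissipative_attractor_def by blast
  have RFc: "compact (RF \<delta>) \<and> RF \<delta> \<noteq> {}" if "\<delta> > 0" for \<delta>
    using RF[OF that] cpt_attr unfolding PR_def dissipative_attractor_def by blast
  define gA where "gA \<delta> = (SOME r. r > 0 \<and> AF \<delta> \<inter> nbhd C r = {})" for \<delta>
  define gR where "gR \<delta> = (SOME r. r > 0 \<and> RF \<delta> \<inter> nbhd C r = {})" for \<delta>
  have gA: "gA \<delta> > 0 \<and> AF \<delta> \<inter> nbhd C (gA \<delta>) = {}" if "\<delta> > 0" for \<delta>
  proof -
    have "\<exists>r>0. AF \<delta> \<inter> nbhd C r = {}"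
      using gap[of "AF \<delta>" C] AFc[OF that] Ccl Cne AF[OF that] unfolding PA_def by blast
    then have "(SOME r. r > 0 \<and> AF \<delta> \<inter> nbhd C r = {}) > 0 \<and> AF \<delta> \<inter> nbhd C (SOME r. r > 0 \<and> AF \<delta> \<inter> nbhd C r = {}) = {}"
      by (rule someI_ex)
    then show ?thesis unfolding gA_def .
  qed
  have gR: "gR \<delta> > 0 \<and> RF \<delta> \<inter> nbhd C (gR \<delta>) = {}" if "\<delta> > 0" for \<delta>
  proof -
    have "\<exists>r>0. RF \<delta> \<inter> nbhd C r = {}"
      using gap[of "RF \<delta>" C] RFc[OF that] Ccl Cne RF[OF that] unfolding PR_def by blast
    then have "(SOME r. r > 0 \<and> RF \<delta> \<inter> nbhd C r = {}) > 0 \<and> RF \<delta> \<inter> nbhd C (SOME r. r > 0 \<and> RF \<delta> \<inter> nbhd C r = {}) = {}"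
      by (rule someI_ex)
    then show ?thesis unfolding gR_def .
  qed
  define d where "d = rec_nat (1::real) (\<lambda>k dk. min (dk/2) (min (gA dk) (gR dk)))"
  have d0: "d 0 = 1" by (simp add: d_def)
  have dS: "d (Suc k) = min (d k / 2) (min (gA (d k)) (gR (d k)))" for k by (simp add: d_def)
  have dpos: "d k > 0" for k
    by (induction k) (auto simp: d0 dS gA gR)
  have dle: "d k \<le> (1/2)^k" for k
  proof (induction k)
    case 0 then show ?case by (simp add: d0)
  next
    case (Suc k) then show ?case by (simp add: dS)
  qed
  have dstep: "d (Suc n) \<le> d n" for n
  proof -
    have "d (Suc n) \<le> d n / 2" by (simp add: dS)
    then show ?thesis using dpos[of n] by linarith
  qed
  have dmono: "d k \<le> d j" if "j \<le> k" for j k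
    using lift_Suc_antimono_le[of d, OF dstep that] .
  define A where "A k = AF (d k)" for k
  define R where "R k = RF (d k)" for k
  have sepA: "A j \<noteq> A k" if "j < k" for j k
  proof -
    have "d k \<le> d (Suc j)" using dmono that by auto
    also have "\<dots> \<le> gA (d j)" using dS by simp
    finally have "nbhd C (d k) \<subseteq> nbhd C (gA (d j))" by (rule nbhd_mono)
    moreover have "A k \<subseteq> nbhd C (d k)" using AF[OF dpos] unfolding A_def PA_def by blast
    moreover have "A j \<inter> nbhd C (gA (d j)) = {}" using gA[OF dpos] unfolding A_def by blast
    moreover have "A k \<noteq> {}" using AFc[OF dpos] unfolding A_def by blast
    ultimately show ?thesis by blast
  qed
  have sepR: "R j \<noteq> R k" if "j < k" for j k
  proof -
    have "d k \<le> d (Suc j)" using dmono that by auto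
    also have "\<dots> \<le> gR (d j)" using dS by simp
    finally have "nbhd C (d k) \<subseteq> nbhd C (gR (d j))" by (rule nbhd_mono)
    moreover have "R k \<subseteq> nbhd C (d k)" using RF[OF dpos] unfolding R_def PR_def by blast
    moreover have "R j \<inter> nbhd C (gR (d j)) = {}" using gR[OF dpos] unfolding R_def by blast
    moreover have "R k \<noteq> {}" using RFc[OF dpos] unfolding R_def by blast
    ultimately show ?thesis by blast
  qed
  have injA: "inj A"
  proof (rule injI, rule ccontr)
    fix x y assume "A x = A y" "x \<noteq> y"
    then show False using sepA by (metis linorder_neq_iff)
  qed
  have injR: "inj R"
  proof (rule injI, rule ccontr)
    fix x y assume "R x = R y" "x \<noteq> y"
    then show False using sepR by (metis linorder_neq_iff)
  qed
  have lim: "d \<longlonglongrightarrow> 0"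
  proof (rule tendsto_sandwich[of "\<lambda>_. 0" d sequentially "\<lambda>k. (1/2::real)^k"])
    show "\<forall>\<^sub>F n in sequentially. 0 \<le> d n" using dpos by (simp add: less_imp_le)
    show "\<forall>\<^sub>F n in sequentially. d n \<le> (1/2)^n" using dle by simp
    show "(\<lambda>_. 0::real) \<longlonglongrightarrow> 0" by simp
    show "(\<lambda>k. (1/2::real)^k) \<longlonglongrightarrow> 0" by (rule LIMSEQ_realpow_zero) auto
  qed
  have "\<forall>k. dissipative_attractor M f (A k)" using AF dpos unfolding A_def PA_def by blast
  moreover have "\<forall>k. dissipative_attractor M g (R k)" using RF dpos unfolding R_def PR_def by blast
  moreover have "\<forall>k. A k \<subseteq> nbhd C (d k) \<and> R k \<subseteq> nbhd C (d k)"
    using AF RF dpos unfolding A_def R_def PA_def PR_def by blast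
  ultimately show ?thesis using injA injR lim by blast
qed


end
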